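(* Let $N\ge1$, $n\ge1$, $\gamma>0$, and let channel gains $g_{S,k}>0$, $g_{k,D}>0$ ($k=1,\dots,N$) satisfy $g_{S,1}\le g_{S,2}\le\cdots\le g_{S,N}$. Put $C_{a,b}=C(g_{a,b}\gamma)$ and $V_{a,b}=V(g_{a,b}\gamma)$ with $C(\rho)=\tfrac12\log(1+\rho)$ and $V(\rho)=\frac{\rho}{2}\frac{2+\rho}{(1+\rho)^2}(\log e)^2$. Let $\varepsilon_d'\in(0,\tfrac12)$. For $x=(x_1[1],\dots,x_N[N])$ with all $x_k[k]>0$ define, for $1\le k\le m\le N$, $$x_m[k]=\sqrt{\tfrac{n}{V_{S,m}}}\,(C_{S,m}-C_{S,k})+\sqrt{\tfrac{V_{S,m}}{V_{S,k}}}\,x_k[k],\qquad x_D[k]=\sqrt{\tfrac{n}{V_{k,D}}}\,(C_{k,D}-C_{S,k})+\sqrt{\tfrac{V_{S,k}}{V_{k,D}}}\,x_k[k].$$ Consider the problem of minimizing $\sum_{k=1}^N\sqrt{V_{S,k}}\,x_k[k]$ over all $x$ with $x_k[k]>0$ for all $k$ subject to $$\sum_{k=1}^N\Big(\sum_{m=k}^N Q(x_m[k])+Q(x_D[k])\Big)\le\varepsilon_d'.$$ Then every optimal solution $x$ of this problem satisfies $$\sum_{k=1}^N\Big(\sum_{m=k}^N Q(x_m[k])+Q(x_D[k])\Big)=\varepsilon_d'.$$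
   Context: $Q(x)=\int_x^\infty\frac{1}{\sqrt{2\pi}}e^{-t^2/2}\,dt$ is the Gaussian tail function. $C$ is the capacity and $V$ the channel dispersion of a real AWGN channel with SNR $\rho$; $S$ is the source, $D$ the destination, relays are indexed $1,\dots,N$, $g_{a,b}$ is the channel gain of link $a\to b$, $\gamma$ the transmit SNR, and $n$ the blocklength. The variable $x_m[k]$ stands for $Q^{-1}$ of the error probability of relay $m$ (resp. $D$ for $x_D[k]$) decoding message $W_k$. *)

theory Defs
  imports "HOL-Analysis.Analysis"
begin

definition Qf :: "real \<Rightarrow> real" where
  "Qf x = (LBINT t:{x..}. (1 / sqrt (2 * pi)) * exp (- (t\<^sup>2) / 2))"

definition capC :: "real \<Rightarrow> real" where
  "capC \<rho> = (1/2) * log 2 (1 + \<rho>)"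

definition dispV :: "real \<Rightarrow> real" where
  "dispV \<rho> = (\<rho> / 2) * ((2 + \<rho>) / (1 + \<rho>)\<^sup>2) * (log 2 (exp 1))\<^sup>2"

text \<open>x_m[k] for relay m decoding W_k (k \<le> m), given x_k[k] = x k.
  gS k = g_{S,k}, gD k = g_{k,D}.\<close>
definition xrel :: "(nat \<Rightarrow> real) \<Rightarrow> real \<Rightarrow> nat \<Rightarrow> (nat \<Rightarrow> real) \<Rightarrow> nat \<Rightarrow> nat \<Rightarrow> real" where
  "xrel gS \<gamma> n x m k =
     sqrt (real n / dispV (gS m * \<gamma>)) * (capC (gS m * \<gamma>) - capC (gS k * \<gamma>))
     + sqrt (dispV (gS m * \<gamma>) / dispV (gS k * \<gamma>)) * x k"

definition xdst :: "(nat \<Rightarrow> real) \<Rightarrow> (nat \<Rightarrow> real) \<Rightarrow> real \<Rightarrow> nat \<Rightarrow> (nat \<Rightarrow> real) \<Rightarrow> nat \<Rightarrow> real" where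
  "xdst gS gD \<gamma> n x k =
     sqrt (real n / dispV (gD k * \<gamma>)) * (capC (gD k * \<gamma>) - capC (gS k * \<gamma>))
     + sqrt (dispV (gS k * \<gamma>) / dispV (gD k * \<gamma>)) * x k"

definition err_sum :: "nat \<Rightarrow> (nat \<Rightarrow> real) \<Rightarrow> (nat \<Rightarrow> real) \<Rightarrow> real \<Rightarrow> nat \<Rightarrow> (nat \<Rightarrow> real) \<Rightarrow> real" where
  "err_sum N gS gD \<gamma> n x =
     (\<Sum>k=1..N. (\<Sum>m=k..N. Qf (xrel gS \<gamma> n x m k)) + Qf (xdst gS gD \<gamma> n x k))"

definition objective :: "nat \<Rightarrow> (nat \<Rightarrow> real) \<Rightarrow> real \<Rightarrow> (nat \<Rightarrow> real) \<Rightarrow> real" where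
  "objective N gS \<gamma> x = (\<Sum>k=1..N. sqrt (dispV (gS k * \<gamma>)) * x k)"

definition feasible :: "nat \<Rightarrow> (nat \<Rightarrow> real) \<Rightarrow> (nat \<Rightarrow> real) \<Rightarrow> real \<Rightarrow> nat \<Rightarrow> real \<Rightarrow> (nat \<Rightarrow> real) \<Rightarrow> bool" where
  "feasible N gS gD \<gamma> n \<epsilon> x \<longleftrightarrow>
     (\<forall>k\<in>{1..N}. x k > 0) \<and> err_sum N gS gD \<gamma> n x \<le> \<epsilon>"

definition optimal :: "nat \<Rightarrow> (nat \<Rightarrow> real) \<Rightarrow> (nat \<Rightarrow> real) \<Rightarrow> real \<Rightarrow> nat \<Rightarrow> real \<Rightarrow> (nat \<Rightarrow> real) \<Rightarrow> bool" where
  "optimal N gS gD \<gamma> n \<epsilon> x \<longleftrightarrow>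
     feasible N gS gD \<gamma> n \<epsilon> x \<and>
     (\<forall>y. feasible N gS gD \<gamma> n \<epsilon> y \<longrightarrow> objective N gS \<gamma> x \<le> objective N gS \<gamma> y)"

end

theory Submission
  imports Defs "HOL-Probability.Probability"
begin

lemma Qf_alt: "Qf x = (LBINT t:{x..}. std_normal_density t)"
  unfolding Qf_def std_normal_density_def by simp

lemma sint: "set_integrable lborel A std_normal_density" if "A \<in> sets lborel"
  unfolding set_integrable_def
  by (rule integrable_mult_indicator[OF that]) simp

lemma snd_le1: "std_normal_density t \<le> 1"
proof -
  have "exp (- t\<^sup>2 / 2) \<le> 1" by simp
  moreover have "1 / sqrt (2 * pi) \<le> 1" using pi_gt3 by (simp add: divide_le_eq real_le_rsqrt)
  ultimately show ?thesis unfolding std_normal_density_def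
    by (metis exp_ge_zero mult_le_one zero_le_divide_1_iff real_sqrt_ge_zero pi_ge_zero mult_nonneg_nonneg zero_le_numeral)
qed

lemma Qf_diff: assumes "a \<le> b" shows "0 \<le> Qf a - Qf b \<and> Qf a - Qf b \<le> b - a"
proof -
  have U: "{a..} = {a..<b} \<union> {b..}" using assms by auto
  have "Qf a = (LBINT t:{a..<b}. std_normal_density t) + Qf b"
    unfolding Qf_alt U
    by (rule set_integral_Un) (auto intro: sint)
  moreover have I1: "set_integrable lborel {a..<b} (\<lambda>x. 1::real)"
    unfolding set_integrable_def using assms by (simp add: emeasure_lborel_Ico)
  moreover have "(LBINT t:{a..<b}. std_normal_density t) \<le> (LBINT t:{a..<b}. 1)"
    by (rule set_integral_mono) (auto intro!: I1 sint snd_le1 integrable_real_indicator simp: set_integrable_def[symmetric] emeasure_lborel_Ico)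
  moreover have "(LBINT t:{a..<b}. (1::real)) = b - a" using assms by (subst set_integral_const) auto
  moreover have "0 \<le> (LBINT t:{a..<b}. std_normal_density t)"
    unfolding set_lebesgue_integral_def by (rule integral_nonneg_AE) (auto split: split_indicator)
  ultimately show ?thesis by linarith
qed

lemma Qf_lip: "\<bar>Qf a - Qf b\<bar> \<le> \<bar>a - b\<bar>"
  using Qf_diff[of a b] Qf_diff[of b a] by (cases "a \<le> b") auto

lemma isCont_Qf: "isCont Qf a"
proof (rule continuous_at_eps_delta[THEN iffD2], intro allI impI)
  fix e :: real assume "e > 0"
  then show "\<exists>d>0. \<forall>x'. dist x' a < d \<longrightarrow> dist (Qf x') (Qf a) < e"
    using Qf_lip by (auto simp: dist_real_def intro!: exI[of _ e] order.strict_trans1[OF Qf_lip])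
qed

lemma isCont_Qf_comp[continuous_intros]: "isCont f a \<Longrightarrow> isCont (\<lambda>x. Qf (f x)) a"
  using isCont_o2[OF _ isCont_Qf] by blast

lemma dispV_pos: assumes "r > 0" shows "dispV r > 0"
proof -
  have "log 2 (exp 1) \<noteq> 0" by (simp add: log_def)
  then have "(log 2 (exp 1))\<^sup>2 > 0" by simp
  moreover have "r / 2 * ((2 + r) / (1 + r)\<^sup>2) > 0" using assms by (simp add: add_pos_pos)
  ultimately show ?thesis unfolding dispV_def using assms by (intro mult_pos_pos divide_pos_pos) auto
qed

lemma isCont_upd[continuous_intros]: "isCont (\<lambda>d. if k = (1::nat) then x 1 - d else (x k::real)) a"
  by (cases "k = 1") (auto intro: continuous_intros)

theorem lemma2:
  fixes N n :: nat and \<gamma> \<epsilon> :: real and gS gD x :: "nat \<Rightarrow> real"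
  assumes "N \<ge> 1" and "n \<ge> 1" and "\<gamma> > 0"
    and "\<forall>k\<in>{1..N}. gS k > 0" and "\<forall>k\<in>{1..N}. gD k > 0"
    and "\<forall>k\<in>{1..N}. \<forall>m\<in>{1..N}. k \<le> m \<longrightarrow> gS k \<le> gS m"
    and "0 < \<epsilon>" and "\<epsilon> < 1/2"
    and "optimal N gS gD \<gamma> n \<epsilon> x"
  shows "err_sum N gS gD \<gamma> n x = \<epsilon>"
proof (rule ccontr)
  assume ne: "err_sum N gS gD \<gamma> n x \<noteq> \<epsilon>"
  have feas: "\<forall>k\<in>{1..N}. x k > 0" "err_sum N gS gD \<gamma> n x \<le> \<epsilon>"
    using assms(9) unfolding optimal_def feasible_def by auto
  with ne have lt: "err_sum N gS gD \<gamma> n x < \<epsilon>" by simp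
  have x1: "x 1 > 0" using feas assms(1) by auto
  define y where "y = (\<lambda>d k. if k = 1 then x 1 - d else x k)"
  define h where "h = (\<lambda>d. err_sum N gS gD \<gamma> n (y d))"
  have "isCont h 0"
    unfolding h_def err_sum_def xrel_def xdst_def y_def
    by (intro continuous_intros)
  moreover have "h 0 = err_sum N gS gD \<gamma> n x"
    unfolding h_def y_def by (simp add: fun_eq_iff[symmetric] if_distrib cong: if_cong) (metis)
  ultimately have ev1: "\<forall>\<^sub>F d in at 0. h d < \<epsilon>"
    using lt by (metis isCont_def order_tendstoD(2))
  have "((\<lambda>d. x 1 - d) \<longlongrightarrow> x 1) (at 0)" by (intro tendsto_eq_intros) auto
  then have ev2: "\<forall>\<^sub>F d in at 0. 0 < x 1 - d" by (rule order_tendstoD(1)[OF _ x1])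
  from eventually_conj[OF ev1 ev2] obtain e where e: "e > 0"
    "\<forall>d. d \<noteq> 0 \<and> dist d 0 < e \<longrightarrow> h d < \<epsilon> \<and> x 1 - d > 0"
    unfolding eventually_at by blast
  define d where "d = e / 2"
  have d: "d > 0" "h d < \<epsilon>" "x 1 - d > 0" using e(2)[rule_format, of "e/2"] e(1) unfolding d_def by (auto simp: dist_real_def)
  have fy: "feasible N gS gD \<gamma> n \<epsilon> (y d)"
    unfolding feasible_def using d feas unfolding h_def y_def by auto
  let ?s = "\<lambda>k. sqrt (dispV (gS k * \<gamma>))"
  have s1: "?s 1 > 0" using assms(1,3,4) dispV_pos by auto
  have "objective N gS \<gamma> (y d) = (\<Sum>k=1..N. ?s k * x k - (if k = 1 then ?s k * d else 0))"
    unfolding objective_def y_def by (intro sum.cong) (auto simp: algebra_simps)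
  also have "\<dots> = objective N gS \<gamma> x - ?s 1 * d"
    unfolding objective_def sum_subtractf using assms(1) by (simp add: sum.delta)
  finally have "objective N gS \<gamma> (y d) < objective N gS \<gamma> x" using s1 d by simp
  with fy assms(9) show False unfolding optimal_def by force
qed

end
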